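(* Let $R_1\leftarrow R_{12}\to R_2$ be a correspondence in $\mathrm{DGRings}^{0,-1}$. It is admissible if and only if the correspondence of underlying groupoids $\mathrm{Cone}(R_1)\leftarrow\mathrm{Cone}(R_{12})\to\mathrm{Cone}(R_2)$ in $\mathrm{Cats}'$ is admissible in the categorical sense.
   Context: Rings are commutative and unital. $\mathrm{DGRings}^{0,-1}$ is the category of commutative DG rings $R$ with $R^i=0$ for $i\ne0,-1$. Equivalently, such $R$ is a ring $C=R^0$, a $C$-module $I=R^{-1}$ and a $C$-linear $d:I\to C$ with $d(x)y=d(y)x$. Quasi-isomorphisms are morphisms inducing isomorphisms on $\ker d$ and $\operatorname{coker} d$. A correspondence $R_1\xleftarrow{f}R_{12}\xrightarrow{g}R_2$ in $\mathrm{DGRings}^{0,-1}$ is admissible if $f$ is a quasi-isomorphism and $R_{12}^{-1}\to R_1^{-1}\times R_2^{-1}$ is an isomorphism. $\mathrm{Cone}(R)$ is the groupoid whose set of objects is $C$ and whose morphisms are the pairs $(c,x)\in C\times I$, the pair being a morphism $c\to c+dx$. Composition is $(c+dx,y)\circ(c,x)=(c,x+y)$. A morphism of $\mathrm{DGRings}^{0,-1}$ induces a functor in the obvious way. $\mathrm{Cats}'$ is the naive 1-category of small categories, with functors on the nose. A correspondence $\mathcal{C}_1\leftarrow\mathcal{C}_{12}\to\mathcal{C}_2$ in $\mathrm{Cats}'$ is admissible in the categorical sense if it is isomorphic, as a correspondence (isomorphism of middle terms commuting on the nose with both legs), to $\mathcal{C}_1\leftarrow\mathrm{Graph}_\Phi\to\mathcal{C}_2$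 for some functor $\Phi:\mathcal{C}_1\to\mathcal{C}_2$. Here $\mathrm{Graph}_\Phi$ is the category of triples $(c_1,c_2,\psi:\Phi(c_1)\xrightarrow{\sim}c_2)$ with the projection functors. *)

theory Defs
  imports "HOL-Algebra.Module" "HOL-Algebra.RingHom"
begin

text \<open>A DG ring R in DGRings^{0,-1}: a commutative ring C = R^0 (deg0), a C-module
  I = R^{-1} (deg1) and a C-linear map d : I -> C (diff) with d(x) y = d(y) x.\<close>

record ('a, 'b) dgr =
  deg0 :: "'a ring"
  deg1 :: "('a, 'b) module"
  diff :: "'b \<Rightarrow> 'a"

definition dg_ring :: "('a, 'b) dgr \<Rightarrow> bool" where
  "dg_ring R \<longleftrightarrow>
     module (deg0 R) (deg1 R) \<and>
     (\<forall>x\<in>carrier (deg1 R). diff R x \<in> carrier (deg0 R)) \<and>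
     (\<forall>x\<in>carrier (deg1 R). \<forall>y\<in>carrier (deg1 R).
        diff R (x \<oplus>\<^bsub>deg1 R\<^esub> y) = diff R x \<oplus>\<^bsub>deg0 R\<^esub> diff R y) \<and>
     (\<forall>c\<in>carrier (deg0 R). \<forall>x\<in>carrier (deg1 R).
        diff R (smult (deg1 R) c x) = c \<otimes>\<^bsub>deg0 R\<^esub> diff R x) \<and>
     (\<forall>x\<in>carrier (deg1 R). \<forall>y\<in>carrier (deg1 R).
        smult (deg1 R) (diff R x) y = smult (deg1 R) (diff R y) x)"

definition dg_hom :: "('a, 'b) dgr \<Rightarrow> ('c, 'd) dgr \<Rightarrow> ('a \<Rightarrow> 'c) \<times> ('b \<Rightarrow> 'd) \<Rightarrow> bool" where
  "dg_hom R S f \<longleftrightarrow>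
     fst f \<in> ring_hom (deg0 R) (deg0 S) \<and>
     snd f \<in> carrier (deg1 R) \<rightarrow> carrier (deg1 S) \<and>
     (\<forall>x\<in>carrier (deg1 R). \<forall>y\<in>carrier (deg1 R).
        snd f (x \<oplus>\<^bsub>deg1 R\<^esub> y) = snd f x \<oplus>\<^bsub>deg1 S\<^esub> snd f y) \<and>
     (\<forall>c\<in>carrier (deg0 R). \<forall>x\<in>carrier (deg1 R).
        snd f (smult (deg1 R) c x) = smult (deg1 S) (fst f c) (snd f x)) \<and>
     (\<forall>x\<in>carrier (deg1 R). diff S (snd f x) = fst f (diff R x))"

text \<open>ker d and coker d = C / d(I) (the latter as the set of cosets c + d(I)).\<close>

definition dker :: "('a, 'b) dgr \<Rightarrow> 'b set" where
  "dker R = {x \<in> carrier (deg1 R). diff R x = \<zero>\<^bsub>deg0 R\<^esub>}"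

definition dcoset :: "('a, 'b) dgr \<Rightarrow> 'a \<Rightarrow> 'a set" where
  "dcoset R c = {c \<oplus>\<^bsub>deg0 R\<^esub> diff R x | x. x \<in> carrier (deg1 R)}"

definition coker :: "('a, 'b) dgr \<Rightarrow> 'a set set" where
  "coker R = dcoset R ` carrier (deg0 R)"

definition coker_map :: "('a, 'b) dgr \<Rightarrow> ('c, 'd) dgr \<Rightarrow> ('a \<Rightarrow> 'c) \<Rightarrow> 'a set \<Rightarrow> 'c set" where
  "coker_map R S f0 A =
     {f0 a \<oplus>\<^bsub>deg0 S\<^esub> diff S y | a y. a \<in> A \<and> y \<in> carrier (deg1 S)}"

definition dg_quasi_iso :: "('a, 'b) dgr \<Rightarrow> ('c, 'd) dgr \<Rightarrow> ('a \<Rightarrow> 'c) \<times> ('b \<Rightarrow> 'd) \<Rightarrow> bool" where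
  "dg_quasi_iso R S f \<longleftrightarrow>
     dg_hom R S f \<and>
     bij_betw (snd f) (dker R) (dker S) \<and>
     bij_betw (coker_map R S (fst f)) (coker R) (coker S)"

definition dg_admissible ::
  "('a, 'b) dgr \<Rightarrow> ('c, 'd) dgr \<Rightarrow> ('e, 'h) dgr \<Rightarrow>
   ('c \<Rightarrow> 'a) \<times> ('d \<Rightarrow> 'b) \<Rightarrow> ('c \<Rightarrow> 'e) \<times> ('d \<Rightarrow> 'h) \<Rightarrow> bool" where
  "dg_admissible R1 R12 R2 f g \<longleftrightarrow>
     dg_quasi_iso R12 R1 f \<and>
     bij_betw (\<lambda>x. (snd f x, snd g x)) (carrier (deg1 R12))
              (carrier (deg1 R1) \<times> carrier (deg1 R2))"

text \<open>Cmp C g f is the composite g o f (defined when Cod f = Dom g).\<close>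

record ('o, 'm) cat =
  Ob  :: "'o set"
  Ar  :: "'m set"
  Dom :: "'m \<Rightarrow> 'o"
  Cod :: "'m \<Rightarrow> 'o"
  Idn :: "'o \<Rightarrow> 'm"
  Cmp :: "'m \<Rightarrow> 'm \<Rightarrow> 'm"

type_synonym ('o, 'm, 'p, 'n) ftr = "('o \<Rightarrow> 'p) \<times> ('m \<Rightarrow> 'n)"

definition is_functor :: "('o, 'm) cat \<Rightarrow> ('p, 'n) cat \<Rightarrow> ('o, 'm, 'p, 'n) ftr \<Rightarrow> bool" where
  "is_functor C D F \<longleftrightarrow>
     (\<forall>a\<in>Ob C. fst F a \<in> Ob D) \<and>
     (\<forall>u\<in>Ar C. snd F u \<in> Ar D \<and> Dom D (snd F u) = fst F (Dom C u) \<and>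
                Cod D (snd F u) = fst F (Cod C u)) \<and>
     (\<forall>a\<in>Ob C. snd F (Idn C a) = Idn D (fst F a)) \<and>
     (\<forall>u\<in>Ar C. \<forall>v\<in>Ar C. Cod C u = Dom C v \<longrightarrow>
        snd F (Cmp C v u) = Cmp D (snd F v) (snd F u))"

definition fcomp :: "('p, 'n, 'q, 'k) ftr \<Rightarrow> ('o, 'm, 'p, 'n) ftr \<Rightarrow> ('o, 'm, 'q, 'k) ftr" where
  "fcomp G F = (fst G \<circ> fst F, snd G \<circ> snd F)"

text \<open>Equality of functors out of C (on the nose; functions compared on C only).\<close>

definition feq :: "('o, 'm) cat \<Rightarrow> ('o, 'm, 'p, 'n) ftr \<Rightarrow> ('o, 'm, 'p, 'n) ftr \<Rightarrow> bool" where
  "feq C F G \<longleftrightarrow> (\<forall>a\<in>Ob C. fst F a = fst G a) \<and> (\<forall>u\<in>Ar C. snd F u = snd G u)"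

definition cat_iso :: "('o, 'm) cat \<Rightarrow> ('p, 'n) cat \<Rightarrow> ('o, 'm, 'p, 'n) ftr \<Rightarrow> bool" where
  "cat_iso C D H \<longleftrightarrow> is_functor C D H \<and>
     (\<exists>K. is_functor D C K \<and> feq C (fcomp K H) (id, id) \<and> feq D (fcomp H K) (id, id))"

definition is_iso_arr :: "('o, 'm) cat \<Rightarrow> 'm \<Rightarrow> bool" where
  "is_iso_arr C u \<longleftrightarrow> u \<in> Ar C \<and>
     (\<exists>v\<in>Ar C. Dom C v = Cod C u \<and> Cod C v = Dom C u \<and>
        Cmp C v u = Idn C (Dom C u) \<and> Cmp C u v = Idn C (Cod C u))"

definition graph_ob :: "('o1, 'm1) cat \<Rightarrow> ('o2, 'm2) cat \<Rightarrow> ('o1, 'm1, 'o2, 'm2) ftr \<Rightarrow>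
    ('o1 \<times> 'o2 \<times> 'm2) set" where
  "graph_ob C1 C2 \<Phi> = {(c1, c2, \<psi>). c1 \<in> Ob C1 \<and> c2 \<in> Ob C2 \<and> is_iso_arr C2 \<psi> \<and>
       Dom C2 \<psi> = fst \<Phi> c1 \<and> Cod C2 \<psi> = c2}"

definition graph_cat :: "('o1, 'm1) cat \<Rightarrow> ('o2, 'm2) cat \<Rightarrow> ('o1, 'm1, 'o2, 'm2) ftr \<Rightarrow>
    ('o1 \<times> 'o2 \<times> 'm2, ('o1 \<times> 'o2 \<times> 'm2) \<times> ('o1 \<times> 'o2 \<times> 'm2) \<times> 'm1 \<times> 'm2) cat" where
  "graph_cat C1 C2 \<Phi> =
    \<lparr> Ob = graph_ob C1 C2 \<Phi>,
      Ar = {(s, t, a1, a2). s \<in> graph_ob C1 C2 \<Phi> \<and> t \<in> graph_ob C1 C2 \<Phi> \<and>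
              a1 \<in> Ar C1 \<and> a2 \<in> Ar C2 \<and>
              Dom C1 a1 = fst s \<and> Cod C1 a1 = fst t \<and>
              Dom C2 a2 = fst (snd s) \<and> Cod C2 a2 = fst (snd t) \<and>
              Cmp C2 (snd (snd t)) (snd \<Phi> a1) = Cmp C2 a2 (snd (snd s))},
      Dom = (\<lambda>(s, t, a1, a2). s),
      Cod = (\<lambda>(s, t, a1, a2). t),
      Idn = (\<lambda>s. (s, s, Idn C1 (fst s), Idn C2 (fst (snd s)))),
      Cmp = (\<lambda>(s', t', b1, b2) (s, t, a1, a2). (s, t', Cmp C1 b1 a1, Cmp C2 b2 a2)) \<rparr>"

definition graph_pr1 :: "('o1 \<times> 'o2 \<times> 'm2, ('o1 \<times> 'o2 \<times> 'm2) \<times> ('o1 \<times> 'o2 \<times> 'm2) \<times> 'm1 \<times> 'm2, 'o1, 'm1) ftr" where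
  "graph_pr1 = ((\<lambda>(c1, c2, \<psi>). c1), (\<lambda>(s, t, a1, a2). a1))"

definition graph_pr2 :: "('o1 \<times> 'o2 \<times> 'm2, ('o1 \<times> 'o2 \<times> 'm2) \<times> ('o1 \<times> 'o2 \<times> 'm2) \<times> 'm1 \<times> 'm2, 'o2, 'm2) ftr" where
  "graph_pr2 = ((\<lambda>(c1, c2, \<psi>). c2), (\<lambda>(s, t, a1, a2). a2))"

definition cat_admissible ::
  "('o1, 'm1) cat \<Rightarrow> ('o, 'm) cat \<Rightarrow> ('o2, 'm2) cat \<Rightarrow>
   ('o, 'm, 'o1, 'm1) ftr \<Rightarrow> ('o, 'm, 'o2, 'm2) ftr \<Rightarrow> bool" where
  "cat_admissible C1 C12 C2 P Q \<longleftrightarrow>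
     (\<exists>\<Phi>. is_functor C1 C2 \<Phi> \<and>
        (\<exists>H. cat_iso C12 (graph_cat C1 C2 \<Phi>) H \<and>
             feq C12 (fcomp graph_pr1 H) P \<and> feq C12 (fcomp graph_pr2 H) Q))"

definition Cone :: "('a, 'b) dgr \<Rightarrow> ('a, 'a \<times> 'b) cat" where
  "Cone R =
    \<lparr> Ob = carrier (deg0 R),
      Ar = carrier (deg0 R) \<times> carrier (deg1 R),
      Dom = (\<lambda>(c, x). c),
      Cod = (\<lambda>(c, x). c \<oplus>\<^bsub>deg0 R\<^esub> diff R x),
      Idn = (\<lambda>c. (c, \<zero>\<^bsub>deg1 R\<^esub>)),
      Cmp = (\<lambda>(c', y) (c, x). (c, x \<oplus>\<^bsub>deg1 R\<^esub> y)) \<rparr>"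

definition Cone_map :: "('a \<Rightarrow> 'c) \<times> ('b \<Rightarrow> 'd) \<Rightarrow> ('a, 'a \<times> 'b, 'c, 'c \<times> 'd) ftr" where
  "Cone_map f = (fst f, (\<lambda>(c, x). (fst f c, snd f x)))"

end

theory Submission
  imports Defs
begin

lemma addhom:
  assumes G: "abelian_group G" and H: "abelian_group H"
    and cl: "\<And>x. x \<in> carrier G \<Longrightarrow> h x \<in> carrier H"
    and ad: "\<And>x y. x \<in> carrier G \<Longrightarrow> y \<in> carrier G \<Longrightarrow> h (x \<oplus>\<^bsub>G\<^esub> y) = h x \<oplus>\<^bsub>H\<^esub> h y"
  shows "h \<zero>\<^bsub>G\<^esub> = \<zero>\<^bsub>H\<^esub>" and "\<And>x. x \<in> carrier G \<Longrightarrow> h (\<ominus>\<^bsub>G\<^esub> x) = \<ominus>\<^bsub>H\<^esub> h x"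
proof -
  interpret G: abelian_group G by fact
  interpret H: abelian_group H by fact
  have "h \<zero>\<^bsub>G\<^esub> \<oplus>\<^bsub>H\<^esub> h \<zero>\<^bsub>G\<^esub> = \<zero>\<^bsub>H\<^esub> \<oplus>\<^bsub>H\<^esub> h \<zero>\<^bsub>G\<^esub>"
    using ad[of "\<zero>\<^bsub>G\<^esub>" "\<zero>\<^bsub>G\<^esub>"] cl by simp
  then show z: "h \<zero>\<^bsub>G\<^esub> = \<zero>\<^bsub>H\<^esub>" using cl[of "\<zero>\<^bsub>G\<^esub>"] by (simp add: H.add.right_cancel)
  fix x assume x: "x \<in> carrier G"
  have "h (\<ominus>\<^bsub>G\<^esub> x) \<oplus>\<^bsub>H\<^esub> h x = \<zero>\<^bsub>H\<^esub>"
    using ad[of "\<ominus>\<^bsub>G\<^esub> x" x] x z by (simp add: G.l_neg)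
  then show "h (\<ominus>\<^bsub>G\<^esub> x) = \<ominus>\<^bsub>H\<^esub> h x"
    using x cl by (metis G.a_inv_closed H.minus_equality)
qed

lemma (in abelian_group) a_lcancel:
  "x \<in> carrier G \<Longrightarrow> y \<in> carrier G \<Longrightarrow> z \<in> carrier G \<Longrightarrow> x \<oplus> y = x \<oplus> z \<Longrightarrow> y = z"
  by (metis r_neg1)

lemma (in abelian_group) a_inv_zero[simp]: "\<ominus> \<zero> = \<zero>"
  by (rule minus_equality) simp_all

locale dgA =
  fixes R :: "('a,'b) dgr"
  assumes dgr: "dg_ring R"
begin

lemma C_ag: "abelian_group (deg0 R)"
  using dgr unfolding dg_ring_def module_def cring_def ring_def by blast
lemma I_ag: "abelian_group (deg1 R)"
  using dgr unfolding dg_ring_def module_def by blast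

sublocale C: abelian_group "deg0 R" by (rule C_ag)
sublocale I: abelian_group "deg1 R" by (rule I_ag)

lemma cone_simps[simp]:
  "Ob (Cone R) = carrier (deg0 R)" "Ar (Cone R) = carrier (deg0 R) \<times> carrier (deg1 R)"
  "Dom (Cone R) (c, x) = c" "Cod (Cone R) (c, x) = c \<oplus>\<^bsub>deg0 R\<^esub> diff R x"
  "Idn (Cone R) c = (c, \<zero>\<^bsub>deg1 R\<^esub>)"
  "Cmp (Cone R) (c', y) (c, x) = (c, x \<oplus>\<^bsub>deg1 R\<^esub> y)"
  by (simp_all add: Cone_def)

lemma d_closed[simp,intro]: "x \<in> carrier (deg1 R) \<Longrightarrow> diff R x \<in> carrier (deg0 R)"
  using dgr unfolding dg_ring_def by blast
lemma d_add[simp]: "x \<in> carrier (deg1 R) \<Longrightarrow> y \<in> carrier (deg1 R) \<Longrightarrow>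
   diff R (x \<oplus>\<^bsub>deg1 R\<^esub> y) = diff R x \<oplus>\<^bsub>deg0 R\<^esub> diff R y"
  using dgr unfolding dg_ring_def by blast
lemma d_zero[simp]: "diff R \<zero>\<^bsub>deg1 R\<^esub> = \<zero>\<^bsub>deg0 R\<^esub>"
  by (rule addhom(1)[OF I_ag C_ag]) auto
lemma d_neg[simp]: "x \<in> carrier (deg1 R) \<Longrightarrow> diff R (\<ominus>\<^bsub>deg1 R\<^esub> x) = \<ominus>\<^bsub>deg0 R\<^esub> diff R x"
  by (rule addhom(2)[OF I_ag C_ag]) auto

lemma cone_iso: "u \<in> Ar (Cone R) \<Longrightarrow> is_iso_arr (Cone R) u"
proof -
  assume "u \<in> Ar (Cone R)"
  then obtain c x where u: "u = (c, x)" and c: "c \<in> carrier (deg0 R)" and x: "x \<in> carrier (deg1 R)"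
    by auto
  show ?thesis unfolding is_iso_arr_def
    apply (rule conjI, simp add: u c x)
    apply (rule bexI[of _ "(c \<oplus>\<^bsub>deg0 R\<^esub> diff R x, \<ominus>\<^bsub>deg1 R\<^esub> x)"])
    using c x by (simp_all add: u C.a_assoc C.r_neg I.r_neg I.l_neg)
qed

lemma dcoset_mem: "c \<in> carrier (deg0 R) \<Longrightarrow> c \<in> dcoset R c"
  unfolding dcoset_def by (rule CollectI, rule exI[of _ "\<zero>\<^bsub>deg1 R\<^esub>"]) simp

lemma dcoset_eq:
  assumes c': "c' \<in> carrier (deg0 R)" and z: "z \<in> carrier (deg1 R)"
    and c: "c = c' \<oplus>\<^bsub>deg0 R\<^esub> diff R z"
  shows "dcoset R c = dcoset R c'"
proof
  show "dcoset R c \<subseteq> dcoset R c'"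
  proof
    fix w assume "w \<in> dcoset R c"
    then obtain x where x: "x \<in> carrier (deg1 R)" and w: "w = c \<oplus>\<^bsub>deg0 R\<^esub> diff R x"
      unfolding dcoset_def by blast
    have "w = c' \<oplus>\<^bsub>deg0 R\<^esub> diff R (z \<oplus>\<^bsub>deg1 R\<^esub> x)"
      using x z c' by (simp add: w c C.a_assoc)
    then show "w \<in> dcoset R c'" unfolding dcoset_def using x z by blast
  qed
next
  show "dcoset R c' \<subseteq> dcoset R c"
  proof
    fix w assume "w \<in> dcoset R c'"
    then obtain x where x: "x \<in> carrier (deg1 R)" and w: "w = c' \<oplus>\<^bsub>deg0 R\<^esub> diff R x"
      unfolding dcoset_def by blast
    have "w = c \<oplus>\<^bsub>deg0 R\<^esub> diff R (\<ominus>\<^bsub>deg1 R\<^esub> z \<oplus>\<^bsub>deg1 R\<^esub> x)"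
      using x z c' by (simp add: w c C.a_assoc C.r_neg2)
    then show "w \<in> dcoset R c" unfolding dcoset_def using x z by blast
  qed
qed

end

locale dgH = S: dgA R + T: dgA S for R :: "('a,'b) dgr" and S :: "('c,'d) dgr" +
  fixes h :: "('a \<Rightarrow> 'c) \<times> ('b \<Rightarrow> 'd)"
  assumes hom: "dg_hom R S h"
begin

lemma h0_closed[simp,intro]: "x \<in> carrier (deg0 R) \<Longrightarrow> fst h x \<in> carrier (deg0 S)"
  using hom unfolding dg_hom_def by (meson ring_hom_closed)
lemma h0_add[simp]: "x \<in> carrier (deg0 R) \<Longrightarrow> y \<in> carrier (deg0 R) \<Longrightarrow>
   fst h (x \<oplus>\<^bsub>deg0 R\<^esub> y) = fst h x \<oplus>\<^bsub>deg0 S\<^esub> fst h y"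
  using hom unfolding dg_hom_def by (meson ring_hom_add)
lemma h0_zero[simp]: "fst h \<zero>\<^bsub>deg0 R\<^esub> = \<zero>\<^bsub>deg0 S\<^esub>"
  by (rule addhom(1)[OF S.C_ag T.C_ag]) auto
lemma h0_neg[simp]: "x \<in> carrier (deg0 R) \<Longrightarrow> fst h (\<ominus>\<^bsub>deg0 R\<^esub> x) = \<ominus>\<^bsub>deg0 S\<^esub> fst h x"
  by (rule addhom(2)[OF S.C_ag T.C_ag]) auto
lemma h1_closed[simp,intro]: "x \<in> carrier (deg1 R) \<Longrightarrow> snd h x \<in> carrier (deg1 S)"
  using hom unfolding dg_hom_def by blast
lemma h1_add[simp]: "x \<in> carrier (deg1 R) \<Longrightarrow> y \<in> carrier (deg1 R) \<Longrightarrow>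
   snd h (x \<oplus>\<^bsub>deg1 R\<^esub> y) = snd h x \<oplus>\<^bsub>deg1 S\<^esub> snd h y"
  using hom unfolding dg_hom_def by blast
lemma h1_zero[simp]: "snd h \<zero>\<^bsub>deg1 R\<^esub> = \<zero>\<^bsub>deg1 S\<^esub>"
  by (rule addhom(1)[OF S.I_ag T.I_ag]) auto
lemma h1_neg[simp]: "x \<in> carrier (deg1 R) \<Longrightarrow> snd h (\<ominus>\<^bsub>deg1 R\<^esub> x) = \<ominus>\<^bsub>deg1 S\<^esub> snd h x"
  by (rule addhom(2)[OF S.I_ag T.I_ag]) auto
lemma h_diff[simp]: "x \<in> carrier (deg1 R) \<Longrightarrow> diff S (snd h x) = fst h (diff R x)"
  using hom unfolding dg_hom_def by blast

lemma coker_map_dcoset: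
  assumes c: "c \<in> carrier (deg0 R)"
  shows "coker_map R S (fst h) (dcoset R c) = dcoset S (fst h c)"
proof
  show "coker_map R S (fst h) (dcoset R c) \<subseteq> dcoset S (fst h c)"
  proof
    fix z assume "z \<in> coker_map R S (fst h) (dcoset R c)"
    then obtain x y where x: "x \<in> carrier (deg1 R)" and y: "y \<in> carrier (deg1 S)"
      and z: "z = fst h (c \<oplus>\<^bsub>deg0 R\<^esub> diff R x) \<oplus>\<^bsub>deg0 S\<^esub> diff S y"
      unfolding coker_map_def dcoset_def by blast
    have "z = fst h c \<oplus>\<^bsub>deg0 S\<^esub> diff S (snd h x \<oplus>\<^bsub>deg1 S\<^esub> y)"
      using x y c by (simp add: z T.C.a_assoc del: h_diff add: h_diff[symmetric])
    then show "z \<in> dcoset S (fst h c)" unfolding dcoset_def using x y by blast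
  qed
next
  show "dcoset S (fst h c) \<subseteq> coker_map R S (fst h) (dcoset R c)"
    unfolding coker_map_def using S.dcoset_mem[OF c] unfolding dcoset_def by blast
qed

end


lemma gr_simps[simp]:
  "Ob (graph_cat C1 C2 \<Phi>) = graph_ob C1 C2 \<Phi>"
  "Dom (graph_cat C1 C2 \<Phi>) (s, t, a1, a2) = s"
  "Cod (graph_cat C1 C2 \<Phi>) (s, t, a1, a2) = t"
  "Idn (graph_cat C1 C2 \<Phi>) s = (s, s, Idn C1 (fst s), Idn C2 (fst (snd s)))"
  "Cmp (graph_cat C1 C2 \<Phi>) (s', t', b1, b2) (s, t, a1, a2) = (s, t', Cmp C1 b1 a1, Cmp C2 b2 a2)"
  by (simp_all add: graph_cat_def)

lemma gr_Ar:
  "Ar (graph_cat C1 C2 \<Phi>) = {(s, t, a1, a2). s \<in> graph_ob C1 C2 \<Phi> \<and> t \<in> graph_ob C1 C2 \<Phi> \<and>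
              a1 \<in> Ar C1 \<and> a2 \<in> Ar C2 \<and>
              Dom C1 a1 = fst s \<and> Cod C1 a1 = fst t \<and>
              Dom C2 a2 = fst (snd s) \<and> Cod C2 a2 = fst (snd t) \<and>
              Cmp C2 (snd (snd t)) (snd \<Phi> a1) = Cmp C2 a2 (snd (snd s))}"
  by (simp add: graph_cat_def)

locale corr = F: dgH R12 R1 f + G: dgH R12 R2 g
  for R1 :: "('a,'b) dgr" and R12 :: "('c,'d) dgr" and R2 :: "('e,'h) dgr"
  and f :: "('c \<Rightarrow> 'a) \<times> ('d \<Rightarrow> 'b)" and g :: "('c \<Rightarrow> 'e) \<times> ('d \<Rightarrow> 'h)"

locale grph = corr +
  fixes \<Phi> :: "('a \<Rightarrow> 'e) \<times> ('a \<times> 'b \<Rightarrow> 'e \<times> 'h)"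
  assumes Phi: "is_functor (Cone R1) (Cone R2) \<Phi>"
begin

abbreviation "Gr \<equiv> graph_cat (Cone R1) (Cone R2) \<Phi>"
definition phi where "phi c1 x1 = snd (snd \<Phi> (c1, x1))"
definition gob where "gob c1 y = (c1, fst \<Phi> c1 \<oplus>\<^bsub>deg0 R2\<^esub> diff R2 y, (fst \<Phi> c1, y))"

lemma Phi_ob[simp,intro]: "c1 \<in> carrier (deg0 R1) \<Longrightarrow> fst \<Phi> c1 \<in> carrier (deg0 R2)"
  using Phi unfolding is_functor_def by simp

lemma Phi_ar:
  assumes "c1 \<in> carrier (deg0 R1)" "x1 \<in> carrier (deg1 R1)"
  shows "snd \<Phi> (c1,x1) = (fst \<Phi> c1, phi c1 x1) \<and> phi c1 x1 \<in> carrier (deg1 R2) \<and>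
     fst \<Phi> c1 \<oplus>\<^bsub>deg0 R2\<^esub> diff R2 (phi c1 x1) = fst \<Phi> (c1 \<oplus>\<^bsub>deg0 R1\<^esub> diff R1 x1)"
proof -
  have "snd \<Phi> (c1,x1) \<in> Ar (Cone R2) \<and> Dom (Cone R2) (snd \<Phi> (c1,x1)) = fst \<Phi> c1 \<and>
     Cod (Cone R2) (snd \<Phi> (c1,x1)) = fst \<Phi> (c1 \<oplus>\<^bsub>deg0 R1\<^esub> diff R1 x1)"
    using Phi assms unfolding is_functor_def by force
  then show ?thesis unfolding phi_def by (cases "snd \<Phi> (c1,x1)") auto
qed

lemma phi_closed[simp,intro]: "c1 \<in> carrier (deg0 R1) \<Longrightarrow> x1 \<in> carrier (deg1 R1) \<Longrightarrow> phi c1 x1 \<in> carrier (deg1 R2)"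
  using Phi_ar by blast

lemma phi_zero[simp]: "c1 \<in> carrier (deg0 R1) \<Longrightarrow> phi c1 \<zero>\<^bsub>deg1 R1\<^esub> = \<zero>\<^bsub>deg1 R2\<^esub>"
proof -
  assume c1: "c1 \<in> carrier (deg0 R1)"
  have "snd \<Phi> (Idn (Cone R1) c1) = Idn (Cone R2) (fst \<Phi> c1)"
    using Phi c1 unfolding is_functor_def by simp
  then show ?thesis unfolding phi_def by simp
qed

lemma gob_in: "c1 \<in> carrier (deg0 R1) \<Longrightarrow> y \<in> carrier (deg1 R2) \<Longrightarrow> gob c1 y \<in> graph_ob (Cone R1) (Cone R2) \<Phi>"
  unfolding gob_def graph_ob_def by (auto intro!: F.T.cone_iso[unfolded] G.T.cone_iso)

lemma ob_form:
  assumes "ob \<in> graph_ob (Cone R1) (Cone R2) \<Phi>"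
  shows "\<exists>c1 y. c1 \<in> carrier (deg0 R1) \<and> y \<in> carrier (deg1 R2) \<and> ob = gob c1 y"
proof -
  obtain c1 c2 \<psi> where o: "ob = (c1, c2, \<psi>)" by (cases ob) auto
  have "c1 \<in> carrier (deg0 R1)" "is_iso_arr (Cone R2) \<psi>" "Dom (Cone R2) \<psi> = fst \<Phi> c1" "Cod (Cone R2) \<psi> = c2"
    using assms unfolding o graph_ob_def by auto
  then show ?thesis unfolding o gob_def is_iso_arr_def by (cases \<psi>) auto
qed

lemma gob_eq[simp]: "gob c1 y = gob c1' y' \<longleftrightarrow> c1 = c1' \<and> y = y'"
  unfolding gob_def by auto

lemma ar_intro:
  assumes c1: "c1 \<in> carrier (deg0 R1)" and y: "y \<in> carrier (deg1 R2)" and y': "y' \<in> carrier (deg1 R2)"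
    and x1: "x1 \<in> carrier (deg1 R1)" and x2: "x2 \<in> carrier (deg1 R2)"
    and c1': "c1' = c1 \<oplus>\<^bsub>deg0 R1\<^esub> diff R1 x1"
    and eq: "phi c1 x1 \<oplus>\<^bsub>deg1 R2\<^esub> y' = y \<oplus>\<^bsub>deg1 R2\<^esub> x2"
  shows "(gob c1 y, gob c1' y', (c1, x1), (fst \<Phi> c1 \<oplus>\<^bsub>deg0 R2\<^esub> diff R2 y, x2)) \<in> Ar Gr"
proof -
  note pa = Phi_ar[OF c1 x1]
  have c1'C: "c1' \<in> carrier (deg0 R1)" using c1' c1 x1 by simp
  have "fst \<Phi> c1' \<oplus>\<^bsub>deg0 R2\<^esub> diff R2 y' =
     (fst \<Phi> c1 \<oplus>\<^bsub>deg0 R2\<^esub> diff R2 (phi c1 x1)) \<oplus>\<^bsub>deg0 R2\<^esub> diff R2 y'"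
    using pa c1' by simp
  also have "\<dots> = fst \<Phi> c1 \<oplus>\<^bsub>deg0 R2\<^esub> diff R2 (phi c1 x1 \<oplus>\<^bsub>deg1 R2\<^esub> y')"
    using c1 x1 y' by (simp add: G.T.C.a_assoc)
  also have "\<dots> = (fst \<Phi> c1 \<oplus>\<^bsub>deg0 R2\<^esub> diff R2 y) \<oplus>\<^bsub>deg0 R2\<^esub> diff R2 x2"
    unfolding eq using c1 y x2 by (simp add: G.T.C.a_assoc)
  finally have cod: "(fst \<Phi> c1 \<oplus>\<^bsub>deg0 R2\<^esub> diff R2 y) \<oplus>\<^bsub>deg0 R2\<^esub> diff R2 x2 =
      fst \<Phi> c1' \<oplus>\<^bsub>deg0 R2\<^esub> diff R2 y'" ..
  show ?thesis unfolding gr_Ar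
    using gob_in[OF c1 y] gob_in[OF c1'C y'] c1 y x1 x2 pa cod eq
    by (simp add: gob_def c1')
qed

lemma ar_eq:
  assumes "(gob c1 y, gob c1' y', a1, a2) \<in> Ar Gr"
  shows "c1 \<in> carrier (deg0 R1) \<and> y \<in> carrier (deg1 R2) \<and> y' \<in> carrier (deg1 R2) \<and>
    a1 = (c1, snd a1) \<and> snd a1 \<in> carrier (deg1 R1) \<and> c1' = c1 \<oplus>\<^bsub>deg0 R1\<^esub> diff R1 (snd a1) \<and>
    a2 = (fst \<Phi> c1 \<oplus>\<^bsub>deg0 R2\<^esub> diff R2 y, snd a2) \<and> snd a2 \<in> carrier (deg1 R2) \<and>
    phi c1 (snd a1) \<oplus>\<^bsub>deg1 R2\<^esub> y' = y \<oplus>\<^bsub>deg1 R2\<^esub> snd a2"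
proof -
  obtain x1 e1 where a1: "a1 = (e1, x1)" by (cases a1)
  obtain x2 e2 where a2: "a2 = (e2, x2)" by (cases a2)
  have m: "gob c1 y \<in> graph_ob (Cone R1) (Cone R2) \<Phi>" "gob c1' y' \<in> graph_ob (Cone R1) (Cone R2) \<Phi>"
    "e1 \<in> carrier (deg0 R1)" "x1 \<in> carrier (deg1 R1)" "e2 \<in> carrier (deg0 R2)" "x2 \<in> carrier (deg1 R2)"
    "e1 = c1" "e1 \<oplus>\<^bsub>deg0 R1\<^esub> diff R1 x1 = c1'"
    "e2 = fst \<Phi> c1 \<oplus>\<^bsub>deg0 R2\<^esub> diff R2 y"
    "Cmp (Cone R2) (fst \<Phi> c1', y') (snd \<Phi> a1) = (fst \<Phi> c1, y \<oplus>\<^bsub>deg1 R2\<^esub> x2)"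
    using assms unfolding gr_Ar by (auto simp: gob_def a1 a2)
  have yy: "y \<in> carrier (deg1 R2)" "y' \<in> carrier (deg1 R2)"
    using m(1,2) ob_form by (metis gob_eq)+
  have "snd \<Phi> a1 = (fst \<Phi> c1, phi c1 x1)" using Phi_ar m a1 by simp
  then show ?thesis using m yy a1 a2 by auto
qed

lemma gr_tgt:
  assumes "(s, t, a1, a2) \<in> Ar Gr" "(s, t', a1, a2) \<in> Ar Gr"
  shows "t = t'"
proof -
  have "s \<in> graph_ob (Cone R1) (Cone R2) \<Phi>" "t \<in> graph_ob (Cone R1) (Cone R2) \<Phi>"
    "t' \<in> graph_ob (Cone R1) (Cone R2) \<Phi>" using assms unfolding gr_Ar by auto
  then obtain c1 y c1' y' c1'' y'' where s: "s = gob c1 y" and t: "t = gob c1' y'" and t': "t' = gob c1'' y''"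
    using ob_form by metis
  note e1 = ar_eq[OF assms(1)[unfolded s t]] and e2 = ar_eq[OF assms(2)[unfolded s t']]
  have "c1' = c1''" using e1 e2 by simp
  moreover have "y' = y''"
    using e1 e2 by (metis G.T.I.a_lcancel phi_closed)
  ultimately show ?thesis by (simp add: t t')
qed

end


locale conv = grph +
  fixes H K
  assumes H: "is_functor (Cone R12) Gr H" and K: "is_functor Gr (Cone R12) K"
    and KH: "feq (Cone R12) (fcomp K H) (id, id)" and HK: "feq Gr (fcomp H K) (id, id)"
    and P1: "feq (Cone R12) (fcomp graph_pr1 H) (Cone_map f)"
    and P2: "feq (Cone R12) (fcomp graph_pr2 H) (Cone_map g)"
begin

lemma KH_ob: "c \<in> carrier (deg0 R12) \<Longrightarrow> fst K (fst H c) = c"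
  using KH unfolding feq_def fcomp_def by simp
lemma KH_ar: "u \<in> Ar (Cone R12) \<Longrightarrow> snd K (snd H u) = u"
  using KH unfolding feq_def fcomp_def by (cases u) simp
lemma HK_ar: "v \<in> Ar Gr \<Longrightarrow> snd H (snd K v) = v"
  using HK unfolding feq_def fcomp_def by simp
lemma H_ob: "c \<in> carrier (deg0 R12) \<Longrightarrow> fst H c \<in> graph_ob (Cone R1) (Cone R2) \<Phi>"
  using H unfolding is_functor_def by simp
lemma K_ob: "ob \<in> graph_ob (Cone R1) (Cone R2) \<Phi> \<Longrightarrow> fst K ob \<in> carrier (deg0 R12)"
  using K unfolding is_functor_def by simp

definition Hy where "Hy c = snd (snd (snd (fst H c)))"

lemma H_pr: assumes c: "c \<in> carrier (deg0 R12)"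
  shows "fst H c = gob (fst f c) (Hy c) \<and> Hy c \<in> carrier (deg1 R2)"
proof -
  obtain c1 y where cy: "c1 \<in> carrier (deg0 R1)" "y \<in> carrier (deg1 R2)" "fst H c = gob c1 y"
    using ob_form[OF H_ob[OF c]] by blast
  have "fst (fst H c) = fst f c" using P1 c unfolding feq_def fcomp_def graph_pr1_def Cone_map_def
    by (simp add: case_prod_beta)
  then show ?thesis using cy unfolding Hy_def by (simp add: gob_def)
qed

lemma H_ar: assumes c: "c \<in> carrier (deg0 R12)" and x: "x \<in> carrier (deg1 R12)"
  shows "snd H (c, x) = (fst H c, fst H (c \<oplus>\<^bsub>deg0 R12\<^esub> diff R12 x), (fst f c, snd f x), (fst g c, snd g x))"
proof -
  have u: "(c, x) \<in> Ar (Cone R12)" using c x by simp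
  have a: "Dom Gr (snd H (c,x)) = fst H c" "Cod Gr (snd H (c,x)) = fst H (c \<oplus>\<^bsub>deg0 R12\<^esub> diff R12 x)"
    using H u unfolding is_functor_def by auto
  have b: "snd graph_pr1 (snd H (c,x)) = (fst f c, snd f x)" "snd graph_pr2 (snd H (c,x)) = (fst g c, snd g x)"
    using P1 P2 u unfolding feq_def fcomp_def Cone_map_def by auto
  show ?thesis using a b unfolding graph_pr1_def graph_pr2_def
    by (cases "snd H (c,x)") auto
qed

lemma K_ar: assumes v: "v \<in> Ar Gr"
  shows "snd K v \<in> Ar (Cone R12) \<and> fst (snd K v) = fst K (Dom Gr v) \<and>
     Cod (Cone R12) (snd K v) = fst K (Cod Gr v)"
  using K v unfolding is_functor_def by (cases "snd K v") auto

abbreviation "z12 \<equiv> \<zero>\<^bsub>deg0 R12\<^esub>"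

lemma pair_inj:
  assumes x: "x \<in> carrier (deg1 R12)" and x': "x' \<in> carrier (deg1 R12)"
    and ef: "snd f x = snd f x'" and eg: "snd g x = snd g x'"
  shows "x = x'"
proof -
  have z: "z12 \<in> carrier (deg0 R12)" by simp
  have m: "snd H (z12, x) \<in> Ar Gr" "snd H (z12, x') \<in> Ar Gr"
    using H x x' unfolding is_functor_def by auto
  have "fst H (z12 \<oplus>\<^bsub>deg0 R12\<^esub> diff R12 x) = fst H (z12 \<oplus>\<^bsub>deg0 R12\<^esub> diff R12 x')"
    using gr_tgt m unfolding H_ar[OF z x] H_ar[OF z x'] ef eg by blast
  then have "snd H (z12, x) = snd H (z12, x')" unfolding H_ar[OF z x] H_ar[OF z x'] ef eg by simp
  then have "snd K (snd H (z12, x)) = snd K (snd H (z12, x'))" by simp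
  then show ?thesis using KH_ar x x' z by simp
qed

lemma pair_surj:
  assumes x1: "x1 \<in> carrier (deg1 R1)" and x2: "x2 \<in> carrier (deg1 R2)"
  shows "\<exists>x \<in> carrier (deg1 R12). snd f x = x1 \<and> snd g x = x2"
proof -
  have z: "z12 \<in> carrier (deg0 R12)" by simp
  define c1 where "c1 = fst f z12"
  define y where "y = Hy z12"
  have c1: "c1 \<in> carrier (deg0 R1)" unfolding c1_def by simp
  have y: "y \<in> carrier (deg1 R2)" and Hz: "fst H z12 = gob c1 y" using H_pr[OF z] by (auto simp: c1_def y_def)
  define y' where "y' = \<ominus>\<^bsub>deg1 R2\<^esub> phi c1 x1 \<oplus>\<^bsub>deg1 R2\<^esub> (y \<oplus>\<^bsub>deg1 R2\<^esub> x2)"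
  have y': "y' \<in> carrier (deg1 R2)" using c1 x1 y x2 by (simp add: y'_def)
  define v where "v = (gob c1 y, gob (c1 \<oplus>\<^bsub>deg0 R1\<^esub> diff R1 x1) y', (c1, x1), (fst \<Phi> c1 \<oplus>\<^bsub>deg0 R2\<^esub> diff R2 y, x2))"
  have v: "v \<in> Ar Gr" unfolding v_def
    by (rule ar_intro[OF c1 y y' x1 x2 refl]) (use c1 x1 y x2 in \<open>simp add: y'_def G.T.I.r_neg2\<close>)
  obtain c x where u: "snd K v = (c, x)" by (cases "snd K v")
  have cx: "c \<in> carrier (deg0 R12)" "x \<in> carrier (deg1 R12)" using K_ar[OF v] u by auto
  have "snd H (c, x) = v" using HK_ar[OF v] u by simp
  then have "snd f x = x1 \<and> snd g x = x2" unfolding H_ar[OF cx] v_def by simp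
  then show ?thesis using cx by blast
qed


lemma endo_g:
  assumes x: "x \<in> dker R12"
  shows "snd g x = phi (fst f z12) (snd f x)"
proof -
  have z: "z12 \<in> carrier (deg0 R12)" by simp
  have xc: "x \<in> carrier (deg1 R12)" and dx: "diff R12 x = z12" using x unfolding dker_def by auto
  define c1 where "c1 = fst f z12"
  have c1: "c1 \<in> carrier (deg0 R1)" unfolding c1_def by simp
  have Hz: "fst H z12 = gob c1 (Hy z12)" using H_pr[OF z] by (simp add: c1_def)
  have "snd H (z12, x) \<in> Ar Gr" using H xc unfolding is_functor_def by auto
  then have "(gob c1 (Hy z12), gob c1 (Hy z12), (c1, snd f x), (fst g z12, snd g x)) \<in> Ar Gr"
    unfolding H_ar[OF z xc] dx using Hz by (simp add: c1_def)
  from ar_eq[OF this] have "phi c1 (snd f x) \<oplus>\<^bsub>deg1 R2\<^esub> Hy z12 = Hy z12 \<oplus>\<^bsub>deg1 R2\<^esub> snd g x"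
    by simp
  then show ?thesis using c1 xc H_pr[OF z]
    by (metis G.T.I.a_comm G.T.I.a_lcancel G.h1_closed phi_closed F.h1_closed c1_def)
qed

lemma ker_bij: "bij_betw (snd f) (dker R12) (dker R1)"
proof (rule bij_betwI')
  fix x x' assume x: "x \<in> dker R12" and x': "x' \<in> dker R12"
  show "(snd f x = snd f x') = (x = x')"
  proof
    assume e: "snd f x = snd f x'"
    have "snd g x = snd g x'" using endo_g[OF x] endo_g[OF x'] e by simp
    then show "x = x'" using pair_inj e x x' unfolding dker_def by blast
  qed simp
next
  fix x assume "x \<in> dker R12"
  then show "snd f x \<in> dker R1" unfolding dker_def by simp
next
  fix k1 assume k1: "k1 \<in> dker R1"
  have k1c: "k1 \<in> carrier (deg1 R1)" and dk: "diff R1 k1 = \<zero>\<^bsub>deg0 R1\<^esub>" using k1 unfolding dker_def by auto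
  have z: "z12 \<in> carrier (deg0 R12)" by simp
  define c1 where "c1 = fst f z12"
  define y where "y = Hy z12"
  have c1: "c1 \<in> carrier (deg0 R1)" unfolding c1_def by simp
  have y: "y \<in> carrier (deg1 R2)" and Hz: "fst H z12 = gob c1 y" using H_pr[OF z] by (auto simp: c1_def y_def)
  define v where "v = (gob c1 y, gob c1 y, (c1, k1), (fst \<Phi> c1 \<oplus>\<^bsub>deg0 R2\<^esub> diff R2 y, phi c1 k1))"
  have v: "v \<in> Ar Gr" unfolding v_def
    by (rule ar_intro[OF c1 y y k1c]) (use c1 k1c y dk in \<open>simp_all add: G.T.I.a_comm\<close>)
  obtain c x where u: "snd K v = (c, x)" by (cases "snd K v")
  have cx: "c \<in> carrier (deg0 R12)" "x \<in> carrier (deg1 R12)" using K_ar[OF v] u by auto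
  have "c = fst K (gob c1 y)" using K_ar[OF v] u by (simp add: v_def)
  then have cz: "c = z12" using KH_ob[OF z] Hz by simp
  have "z12 \<oplus>\<^bsub>deg0 R12\<^esub> diff R12 x = z12" using K_ar[OF v] u cz KH_ob[OF z] Hz by (simp add: v_def)
  then have dx: "diff R12 x = z12" using cx by simp
  have "snd H (c, x) = v" using HK_ar[OF v] u by simp
  then have "snd f x = k1" unfolding H_ar[OF cx] v_def by simp
  then show "\<exists>x\<in>dker R12. k1 = snd f x" using cx dx unfolding dker_def by auto
qed

lemma fib:
  assumes a: "a \<in> carrier (deg0 R12)" and b: "b \<in> carrier (deg0 R12)" and e: "fst f a = fst f b"
  shows "\<exists>x\<in>carrier (deg1 R12). a = b \<oplus>\<^bsub>deg0 R12\<^esub> diff R12 x"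
proof -
  define c1 where "c1 = fst f a"
  have c1: "c1 \<in> carrier (deg0 R1)" unfolding c1_def using a by simp
  have Ha: "fst H a = gob c1 (Hy a)" and ya: "Hy a \<in> carrier (deg1 R2)" using H_pr[OF a] by (auto simp: c1_def)
  have Hb: "fst H b = gob c1 (Hy b)" and yb: "Hy b \<in> carrier (deg1 R2)" using H_pr[OF b] e by (auto simp: c1_def)
  define v where "v = (gob c1 (Hy b), gob c1 (Hy a), (c1, \<zero>\<^bsub>deg1 R1\<^esub>),
      (fst \<Phi> c1 \<oplus>\<^bsub>deg0 R2\<^esub> diff R2 (Hy b), \<ominus>\<^bsub>deg1 R2\<^esub> Hy b \<oplus>\<^bsub>deg1 R2\<^esub> Hy a))"
  have v: "v \<in> Ar Gr" unfolding v_def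
    by (rule ar_intro[OF c1 yb ya]) (use c1 ya yb in \<open>simp_all add: G.T.I.r_neg2\<close>)
  obtain c x where u: "snd K v = (c, x)" by (cases "snd K v")
  have cx: "c \<in> carrier (deg0 R12)" "x \<in> carrier (deg1 R12)" using K_ar[OF v] u by auto
  have "c = b" using K_ar[OF v] u KH_ob[OF b] Hb by (simp add: v_def)
  moreover have "Cod (Cone R12) (c,x) = fst K (Cod Gr v)" by (metis K_ar[OF v] u)
  then have "c \<oplus>\<^bsub>deg0 R12\<^esub> diff R12 x = fst K (gob c1 (Hy a))" by (simp add: v_def)
  then have "c \<oplus>\<^bsub>deg0 R12\<^esub> diff R12 x = a" using KH_ob[OF a] Ha by simp
  ultimately show ?thesis using cx by blast
qed

lemma coker_bij: "bij_betw (coker_map R12 R1 (fst f)) (coker R12) (coker R1)"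
proof (rule bij_betwI')
  fix A B assume "A \<in> coker R12" "B \<in> coker R12"
  then obtain c c' where c: "c \<in> carrier (deg0 R12)" "A = dcoset R12 c"
    and c': "c' \<in> carrier (deg0 R12)" "B = dcoset R12 c'" unfolding coker_def by blast
  show "(coker_map R12 R1 (fst f) A = coker_map R12 R1 (fst f) B) = (A = B)"
  proof
    assume "coker_map R12 R1 (fst f) A = coker_map R12 R1 (fst f) B"
    then have "dcoset R1 (fst f c) = dcoset R1 (fst f c')"
      using c c' F.coker_map_dcoset by simp
    then have "fst f c \<in> dcoset R1 (fst f c')" using F.T.dcoset_mem c by auto
    then obtain y1 where y1: "y1 \<in> carrier (deg1 R1)" and e: "fst f c = fst f c' \<oplus>\<^bsub>deg0 R1\<^esub> diff R1 y1"
      unfolding dcoset_def by blast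
    obtain x where x: "x \<in> carrier (deg1 R12)" "snd f x = y1"
      using pair_surj[OF y1 G.T.I.zero_closed] by blast
    have cc: "c' \<oplus>\<^bsub>deg0 R12\<^esub> diff R12 x \<in> carrier (deg0 R12)" using c' x by simp
    have "fst f c = fst f (c' \<oplus>\<^bsub>deg0 R12\<^esub> diff R12 x)" using e x(1) x(2)[symmetric] c' by simp
    then obtain x' where x': "x' \<in> carrier (deg1 R12)"
      and e2: "c = (c' \<oplus>\<^bsub>deg0 R12\<^esub> diff R12 x) \<oplus>\<^bsub>deg0 R12\<^esub> diff R12 x'"
      using fib[OF c(1) cc] by blast
    have "c = c' \<oplus>\<^bsub>deg0 R12\<^esub> diff R12 (x \<oplus>\<^bsub>deg1 R12\<^esub> x')"
      using e2 x x' c' by (simp add: F.S.C.a_assoc)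
    then have "dcoset R12 c = dcoset R12 c'"
      using F.S.dcoset_eq[OF c'(1), of "x \<oplus>\<^bsub>deg1 R12\<^esub> x'" c] x x' by simp
    then show "A = B" using c c' by simp
  qed simp
next
  fix A assume "A \<in> coker R12"
  then obtain c where c: "c \<in> carrier (deg0 R12)" "A = dcoset R12 c" unfolding coker_def by blast
  then show "coker_map R12 R1 (fst f) A \<in> coker R1"
    using F.coker_map_dcoset unfolding coker_def by simp
next
  fix B assume "B \<in> coker R1"
  then obtain c1 where c1: "c1 \<in> carrier (deg0 R1)" "B = dcoset R1 c1" unfolding coker_def by blast
  define c where "c = fst K (gob c1 \<zero>\<^bsub>deg1 R2\<^esub>)"
  have gi: "gob c1 \<zero>\<^bsub>deg1 R2\<^esub> \<in> graph_ob (Cone R1) (Cone R2) \<Phi>" using gob_in c1 by simp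
  have cc: "c \<in> carrier (deg0 R12)" unfolding c_def using K_ob[OF gi] .
  have "fst H c = gob c1 \<zero>\<^bsub>deg1 R2\<^esub>" using HK gi unfolding feq_def fcomp_def c_def by simp
  then have "fst f c = c1" using H_pr[OF cc] by simp
  then have "B = coker_map R12 R1 (fst f) (dcoset R12 c)" using F.coker_map_dcoset[OF cc] c1 by simp
  then show "\<exists>A\<in>coker R12. B = coker_map R12 R1 (fst f) A" using cc unfolding coker_def by blast
qed

lemma conv_main: "dg_admissible R1 R12 R2 f g"
  unfolding dg_admissible_def dg_quasi_iso_def
proof (intro conjI)
  show "dg_hom R12 R1 f" by (rule F.hom)
  show "bij_betw (snd f) (dker R12) (dker R1)" by (rule ker_bij)
  show "bij_betw (coker_map R12 R1 (fst f)) (coker R12) (coker R1)" by (rule coker_bij)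
  show "bij_betw (\<lambda>x. (snd f x, snd g x)) (carrier (deg1 R12)) (carrier (deg1 R1) \<times> carrier (deg1 R2))"
  proof (rule bij_betwI')
    fix x y assume "x \<in> carrier (deg1 R12)" "y \<in> carrier (deg1 R12)"
    then show "((snd f x, snd g x) = (snd f y, snd g y)) = (x = y)" using pair_inj by auto
  next
    fix x assume "x \<in> carrier (deg1 R12)"
    then show "(snd f x, snd g x) \<in> carrier (deg1 R1) \<times> carrier (deg1 R2)" by simp
  next
    fix p assume "p \<in> carrier (deg1 R1) \<times> carrier (deg1 R2)"
    then show "\<exists>x\<in>carrier (deg1 R12). p = (snd f x, snd g x)"
      using pair_surj by (cases p) force
  qed
qed

end


locale fwd = corr +
  assumes adm: "dg_admissible R1 R12 R2 f g"
begin

lemma kb: "bij_betw (snd f) (dker R12) (dker R1)"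
  and cb: "bij_betw (coker_map R12 R1 (fst f)) (coker R12) (coker R1)"
  and pb: "bij_betw (\<lambda>x. (snd f x, snd g x)) (carrier (deg1 R12)) (carrier (deg1 R1) \<times> carrier (deg1 R2))"
  using adm unfolding dg_admissible_def dg_quasi_iso_def by auto

lemma pinj: "x \<in> carrier (deg1 R12) \<Longrightarrow> x' \<in> carrier (deg1 R12) \<Longrightarrow> snd f x = snd f x' \<Longrightarrow>
   snd g x = snd g x' \<Longrightarrow> x = x'"
  using pb unfolding bij_betw_def inj_on_def by auto

lemma psurj: "x1 \<in> carrier (deg1 R1) \<Longrightarrow> x2 \<in> carrier (deg1 R2) \<Longrightarrow>
   \<exists>x\<in>carrier (deg1 R12). snd f x = x1 \<and> snd g x = x2"
proof -
  assume "x1 \<in> carrier (deg1 R1)" "x2 \<in> carrier (deg1 R2)"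
  then have "(x1, x2) \<in> (\<lambda>x. (snd f x, snd g x)) ` carrier (deg1 R12)"
    using pb unfolding bij_betw_def by simp
  then show ?thesis by force
qed

definition P where "P x1 x2 = (SOME x. x \<in> carrier (deg1 R12) \<and> snd f x = x1 \<and> snd g x = x2)"

lemma P_prop: "x1 \<in> carrier (deg1 R1) \<Longrightarrow> x2 \<in> carrier (deg1 R2) \<Longrightarrow>
   P x1 x2 \<in> carrier (deg1 R12) \<and> snd f (P x1 x2) = x1 \<and> snd g (P x1 x2) = x2"
  unfolding P_def by (rule someI_ex) (use psurj in blast)

lemma P_eq: "x \<in> carrier (deg1 R12) \<Longrightarrow> P (snd f x) (snd g x) = x"
  using P_prop[of "snd f x" "snd g x"] pinj by simp

lemma f0surj: assumes c1: "c1 \<in> carrier (deg0 R1)" shows "\<exists>c\<in>carrier (deg0 R12). fst f c = c1"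
proof -
  have "dcoset R1 c1 \<in> coker R1" using c1 unfolding coker_def by simp
  then obtain A where A: "A \<in> coker R12" "coker_map R12 R1 (fst f) A = dcoset R1 c1"
    using cb unfolding bij_betw_def by (metis imageE)
  then obtain c where c: "c \<in> carrier (deg0 R12)" "A = dcoset R12 c" unfolding coker_def by blast
  have "c1 \<in> dcoset R1 (fst f c)" using A c F.coker_map_dcoset F.T.dcoset_mem c1 by simp
  then obtain y1 where y1: "y1 \<in> carrier (deg1 R1)" "c1 = fst f c \<oplus>\<^bsub>deg0 R1\<^esub> diff R1 y1"
    unfolding dcoset_def by blast
  obtain x where x: "x \<in> carrier (deg1 R12)" "snd f x = y1" using psurj[OF y1(1) G.T.I.zero_closed] by blast
  have "fst f (c \<oplus>\<^bsub>deg0 R12\<^esub> diff R12 x) = c1" using y1 x(1) x(2)[symmetric] c by simp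
  then show ?thesis using c x by (intro bexI[of _ "c \<oplus>\<^bsub>deg0 R12\<^esub> diff R12 x"]) simp_all
qed

lemma f0ker:
  assumes c: "c \<in> carrier (deg0 R12)" and c': "c' \<in> carrier (deg0 R12)" and e: "fst f c = fst f c'"
  shows "\<exists>n\<in>carrier (deg1 R12). snd f n = \<zero>\<^bsub>deg1 R1\<^esub> \<and> c = c' \<oplus>\<^bsub>deg0 R12\<^esub> diff R12 n"
proof -
  have "coker_map R12 R1 (fst f) (dcoset R12 c) = coker_map R12 R1 (fst f) (dcoset R12 c')"
    using F.coker_map_dcoset c c' e by simp
  then have "dcoset R12 c = dcoset R12 c'"
    using cb c c' unfolding bij_betw_def inj_on_def coker_def by blast
  then have "c \<in> dcoset R12 c'" using F.S.dcoset_mem c by metis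
  then obtain x where x: "x \<in> carrier (deg1 R12)" "c = c' \<oplus>\<^bsub>deg0 R12\<^esub> diff R12 x"
    unfolding dcoset_def by blast
  have "fst f c' \<oplus>\<^bsub>deg0 R1\<^esub> \<zero>\<^bsub>deg0 R1\<^esub> = fst f c' \<oplus>\<^bsub>deg0 R1\<^esub> fst f (diff R12 x)"
    using e x c' by simp
  then have "fst f (diff R12 x) = \<zero>\<^bsub>deg0 R1\<^esub>" using c' x
    by (metis F.S.d_closed F.T.C.a_lcancel F.T.C.zero_closed F.h0_closed)
  then have "snd f x \<in> dker R1" using x unfolding dker_def by simp
  then obtain k where k: "k \<in> dker R12" "snd f k = snd f x" using kb unfolding bij_betw_def by (metis imageE)
  have kc: "k \<in> carrier (deg1 R12)" and dk: "diff R12 k = \<zero>\<^bsub>deg0 R12\<^esub>" using k unfolding dker_def by auto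
  have "snd f (x \<oplus>\<^bsub>deg1 R12\<^esub> \<ominus>\<^bsub>deg1 R12\<^esub> k) = \<zero>\<^bsub>deg1 R1\<^esub>"
    using x kc k by (simp add: F.T.I.r_neg)
  moreover have "c = c' \<oplus>\<^bsub>deg0 R12\<^esub> diff R12 (x \<oplus>\<^bsub>deg1 R12\<^esub> \<ominus>\<^bsub>deg1 R12\<^esub> k)"
    using x kc dk c' by simp
  ultimately show ?thesis using x kc by blast
qed

lemma uniq:
  assumes n: "n \<in> carrier (deg1 R12)" and n': "n' \<in> carrier (deg1 R12)"
    and ef: "snd f n = snd f n'" and ed: "diff R12 n = diff R12 n'"
  shows "n = n'"
proof -
  define m where "m = n \<oplus>\<^bsub>deg1 R12\<^esub> \<ominus>\<^bsub>deg1 R12\<^esub> n'"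
  have mc: "m \<in> carrier (deg1 R12)" using n n' by (simp add: m_def)
  have "diff R12 m = \<zero>\<^bsub>deg0 R12\<^esub>" using n n' ed by (simp add: m_def F.S.C.r_neg)
  then have "m \<in> dker R12" using mc unfolding dker_def by simp
  moreover have "\<zero>\<^bsub>deg1 R12\<^esub> \<in> dker R12" unfolding dker_def by simp
  moreover have "snd f m = snd f \<zero>\<^bsub>deg1 R12\<^esub>" using n n' ef by (simp add: m_def F.T.I.r_neg)
  ultimately have "m = \<zero>\<^bsub>deg1 R12\<^esub>" using kb unfolding bij_betw_def inj_on_def by blast
  then have "m \<oplus>\<^bsub>deg1 R12\<^esub> n' = n'" using n' by simp
  then show ?thesis using n n' by (simp add: m_def F.S.I.a_assoc F.S.I.l_neg)
qed

definition sec where "sec c1 = (SOME c. c \<in> carrier (deg0 R12) \<and> fst f c = c1)"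

lemma sec_prop: "c1 \<in> carrier (deg0 R1) \<Longrightarrow> sec c1 \<in> carrier (deg0 R12) \<and> fst f (sec c1) = c1"
  unfolding sec_def by (rule someI_ex) (use f0surj in blast)

definition nn where "nn c = (SOME n. n \<in> carrier (deg1 R12) \<and> snd f n = \<zero>\<^bsub>deg1 R1\<^esub> \<and>
    c = sec (fst f c) \<oplus>\<^bsub>deg0 R12\<^esub> diff R12 n)"

lemma nn_prop: assumes c: "c \<in> carrier (deg0 R12)"
  shows "nn c \<in> carrier (deg1 R12) \<and> snd f (nn c) = \<zero>\<^bsub>deg1 R1\<^esub> \<and>
    c = sec (fst f c) \<oplus>\<^bsub>deg0 R12\<^esub> diff R12 (nn c)"
proof -
  have s: "sec (fst f c) \<in> carrier (deg0 R12)" "fst f (sec (fst f c)) = fst f c"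
    using sec_prop[of "fst f c"] c by auto
  show ?thesis unfolding nn_def by (rule someI_ex) (use f0ker[OF c s(1) s(2)[symmetric]] in blast)
qed

lemma nn_unique:
  assumes c: "c \<in> carrier (deg0 R12)" and n: "n \<in> carrier (deg1 R12)" and fn: "snd f n = \<zero>\<^bsub>deg1 R1\<^esub>"
    and e: "c = sec (fst f c) \<oplus>\<^bsub>deg0 R12\<^esub> diff R12 n"
  shows "nn c = n"
proof -
  note np = nn_prop[OF c]
  have s: "sec (fst f c) \<in> carrier (deg0 R12)" using sec_prop[of "fst f c"] c by auto
  have "diff R12 (nn c) = diff R12 n" using np e s n by (metis F.S.C.a_lcancel F.S.d_closed)
  then show ?thesis using uniq np n fn by simp
qed

definition zz where "zz c1 x1 = (SOME z. z \<in> carrier (deg1 R12) \<and> snd f z = x1 \<and>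
    sec (c1 \<oplus>\<^bsub>deg0 R1\<^esub> diff R1 x1) = sec c1 \<oplus>\<^bsub>deg0 R12\<^esub> diff R12 z)"

lemma zz_prop: assumes c1: "c1 \<in> carrier (deg0 R1)" and x1: "x1 \<in> carrier (deg1 R1)"
  shows "zz c1 x1 \<in> carrier (deg1 R12) \<and> snd f (zz c1 x1) = x1 \<and>
    sec (c1 \<oplus>\<^bsub>deg0 R1\<^esub> diff R1 x1) = sec c1 \<oplus>\<^bsub>deg0 R12\<^esub> diff R12 (zz c1 x1)"
proof -
  obtain x0 where x0: "x0 \<in> carrier (deg1 R12)" "snd f x0 = x1" using psurj[OF x1 G.T.I.zero_closed] by blast
  have s1: "sec c1 \<in> carrier (deg0 R12)" "fst f (sec c1) = c1" using sec_prop c1 by auto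
  have c1': "c1 \<oplus>\<^bsub>deg0 R1\<^esub> diff R1 x1 \<in> carrier (deg0 R1)" using c1 x1 by simp
  have s2: "sec (c1 \<oplus>\<^bsub>deg0 R1\<^esub> diff R1 x1) \<in> carrier (deg0 R12)"
     "fst f (sec (c1 \<oplus>\<^bsub>deg0 R1\<^esub> diff R1 x1)) = c1 \<oplus>\<^bsub>deg0 R1\<^esub> diff R1 x1"
    using sec_prop[OF c1'] by auto
  have a: "sec c1 \<oplus>\<^bsub>deg0 R12\<^esub> diff R12 x0 \<in> carrier (deg0 R12)" using s1 x0 by simp
  have "fst f (sec (c1 \<oplus>\<^bsub>deg0 R1\<^esub> diff R1 x1)) = fst f (sec c1 \<oplus>\<^bsub>deg0 R12\<^esub> diff R12 x0)"
    using s1 s2 x0(1) x0(2)[symmetric] by simp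
  from f0ker[OF s2(1) a this] obtain n where n: "n \<in> carrier (deg1 R12)" "snd f n = \<zero>\<^bsub>deg1 R1\<^esub>"
    "sec (c1 \<oplus>\<^bsub>deg0 R1\<^esub> diff R1 x1) = (sec c1 \<oplus>\<^bsub>deg0 R12\<^esub> diff R12 x0) \<oplus>\<^bsub>deg0 R12\<^esub> diff R12 n"
    by blast
  have "x0 \<oplus>\<^bsub>deg1 R12\<^esub> n \<in> carrier (deg1 R12) \<and> snd f (x0 \<oplus>\<^bsub>deg1 R12\<^esub> n) = x1 \<and>
    sec (c1 \<oplus>\<^bsub>deg0 R1\<^esub> diff R1 x1) = sec c1 \<oplus>\<^bsub>deg0 R12\<^esub> diff R12 (x0 \<oplus>\<^bsub>deg1 R12\<^esub> n)"
    using x0 n s1 x1 by (simp add: F.S.C.a_assoc)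
  then show ?thesis unfolding zz_def by (rule someI)
qed

lemma zz_unique:
  assumes c1: "c1 \<in> carrier (deg0 R1)" and x1: "x1 \<in> carrier (deg1 R1)"
    and z: "z \<in> carrier (deg1 R12)" and fz: "snd f z = x1"
    and e: "sec (c1 \<oplus>\<^bsub>deg0 R1\<^esub> diff R1 x1) = sec c1 \<oplus>\<^bsub>deg0 R12\<^esub> diff R12 z"
  shows "zz c1 x1 = z"
proof -
  note zp = zz_prop[OF c1 x1]
  have s1: "sec c1 \<in> carrier (deg0 R12)" using sec_prop c1 by auto
  have "diff R12 (zz c1 x1) = diff R12 z" using zp e s1 z by (metis F.S.C.a_lcancel F.S.d_closed)
  then show ?thesis using uniq zp z fz by simp
qed

definition Phi where
  "Phi = ((\<lambda>c1. fst g (sec c1)), (\<lambda>u. (fst g (sec (fst u)), snd g (zz (fst u) (snd u)))))"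

lemma Phi_functor: "is_functor (Cone R1) (Cone R2) Phi"
  unfolding is_functor_def
proof (intro conjI ballI impI)
  fix a assume "a \<in> Ob (Cone R1)"
  then show "fst Phi a \<in> Ob (Cone R2)" using sec_prop by (simp add: Phi_def)
next
  fix u assume "u \<in> Ar (Cone R1)"
  then obtain c1 x1 where u: "u = (c1, x1)" "c1 \<in> carrier (deg0 R1)" "x1 \<in> carrier (deg1 R1)" by auto
  note zp = zz_prop[OF u(2,3)]
  have s1: "sec c1 \<in> carrier (deg0 R12)" using sec_prop u by auto
  show "snd Phi u \<in> Ar (Cone R2)" using zp s1 by (simp add: Phi_def u)
  show "Dom (Cone R2) (snd Phi u) = fst Phi (Dom (Cone R1) u)" by (simp add: Phi_def u)
  show "Cod (Cone R2) (snd Phi u) = fst Phi (Cod (Cone R1) u)"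
    using zp s1 by (simp add: Phi_def u)
next
  fix a assume a: "a \<in> Ob (Cone R1)"
  have "zz a \<zero>\<^bsub>deg1 R1\<^esub> = \<zero>\<^bsub>deg1 R12\<^esub>"
    using a sec_prop[of a] by (intro zz_unique) auto
  then show "snd Phi (Idn (Cone R1) a) = Idn (Cone R2) (fst Phi a)" by (simp add: Phi_def)
next
  fix u v assume "u \<in> Ar (Cone R1)" "v \<in> Ar (Cone R1)" and cd: "Cod (Cone R1) u = Dom (Cone R1) v"
  then obtain c1 x1 c1' x1' where u: "u = (c1, x1)" "c1 \<in> carrier (deg0 R1)" "x1 \<in> carrier (deg1 R1)"
    and v: "v = (c1', x1')" "c1' \<in> carrier (deg0 R1)" "x1' \<in> carrier (deg1 R1)" by auto
  have c1': "c1' = c1 \<oplus>\<^bsub>deg0 R1\<^esub> diff R1 x1" using cd u v by simp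
  note zp = zz_prop[OF u(2,3)] and zp' = zz_prop[OF v(2,3)]
  have s1: "sec c1 \<in> carrier (deg0 R12)" using sec_prop u by auto
  have "zz c1 (x1 \<oplus>\<^bsub>deg1 R1\<^esub> x1') = zz c1 x1 \<oplus>\<^bsub>deg1 R12\<^esub> zz c1' x1'"
  proof (rule zz_unique)
    show "sec (c1 \<oplus>\<^bsub>deg0 R1\<^esub> diff R1 (x1 \<oplus>\<^bsub>deg1 R1\<^esub> x1')) =
      sec c1 \<oplus>\<^bsub>deg0 R12\<^esub> diff R12 (zz c1 x1 \<oplus>\<^bsub>deg1 R12\<^esub> zz c1' x1')"
      using zp zp' s1 u v c1' by (simp add: F.T.C.a_assoc F.S.C.a_assoc)
  qed (use zp zp' u v in auto)
  then show "snd Phi (Cmp (Cone R1) v u) = Cmp (Cone R2) (snd Phi v) (snd Phi u)"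
    using zp zp' by (simp add: Phi_def u v)
qed

end


sublocale fwd \<subseteq> Gp: grph R1 R12 R2 f g Phi
  by unfold_locales (rule Phi_functor)

context fwd
begin

lemma phi_eq: "Gp.phi c1 x1 = snd g (zz c1 x1)"
  unfolding Gp.phi_def by (simp add: Phi_def)

lemma Phi0: "fst Phi c1 = fst g (sec c1)" unfolding Phi_def by simp

definition H0 where "H0 c = Gp.gob (fst f c) (snd g (nn c))"

lemma g0_nn: assumes c: "c \<in> carrier (deg0 R12)"
  shows "fst g c = fst Phi (fst f c) \<oplus>\<^bsub>deg0 R2\<^esub> diff R2 (snd g (nn c))"
proof -
  note np = nn_prop[OF c]
  have s: "sec (fst f c) \<in> carrier (deg0 R12)" using sec_prop[of "fst f c"] c by auto
  have "fst g c = fst g (sec (fst f c) \<oplus>\<^bsub>deg0 R12\<^esub> diff R12 (nn c))" using np by metis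
  also have "\<dots> = fst Phi (fst f c) \<oplus>\<^bsub>deg0 R2\<^esub> diff R2 (snd g (nn c))"
    using s conjunct1[OF np] by (simp add: Phi0)
  finally show ?thesis .
qed

lemma H0_simps: assumes c: "c \<in> carrier (deg0 R12)"
  shows "fst (H0 c) = fst f c" "fst (snd (H0 c)) = fst g c"
  using g0_nn[OF c] unfolding H0_def Gp.gob_def by simp_all

lemma H0_in: "c \<in> carrier (deg0 R12) \<Longrightarrow> H0 c \<in> graph_ob (Cone R1) (Cone R2) Phi"
  unfolding H0_def using nn_prop by (intro Gp.gob_in) auto

definition K0 where "K0 ob = sec (fst ob) \<oplus>\<^bsub>deg0 R12\<^esub> diff R12 (P \<zero>\<^bsub>deg1 R1\<^esub> (snd (snd (snd ob))))"

lemma K0_gob: "K0 (Gp.gob c1 y) = sec c1 \<oplus>\<^bsub>deg0 R12\<^esub> diff R12 (P \<zero>\<^bsub>deg1 R1\<^esub> y)"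
  unfolding K0_def Gp.gob_def by simp

lemma KH0: assumes c: "c \<in> carrier (deg0 R12)" shows "K0 (H0 c) = c"
proof -
  note np = nn_prop[OF c]
  have "P \<zero>\<^bsub>deg1 R1\<^esub> (snd g (nn c)) = nn c" using P_eq[of "nn c"] np by simp
  then show ?thesis unfolding H0_def K0_gob using np by simp
qed

lemma HK0: assumes ob: "ob \<in> graph_ob (Cone R1) (Cone R2) Phi"
  shows "K0 ob \<in> carrier (deg0 R12) \<and> H0 (K0 ob) = ob"
proof -
  obtain c1 y where cy: "c1 \<in> carrier (deg0 R1)" "y \<in> carrier (deg1 R2)" "ob = Gp.gob c1 y"
    using Gp.ob_form[OF ob] by blast
  define n where "n = P \<zero>\<^bsub>deg1 R1\<^esub> y"
  have n: "n \<in> carrier (deg1 R12)" "snd f n = \<zero>\<^bsub>deg1 R1\<^esub>" "snd g n = y"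
    using P_prop[of "\<zero>\<^bsub>deg1 R1\<^esub>" y] cy unfolding n_def by auto
  define c where "c = sec c1 \<oplus>\<^bsub>deg0 R12\<^esub> diff R12 n"
  have s: "sec c1 \<in> carrier (deg0 R12)" "fst f (sec c1) = c1" using sec_prop cy by auto
  have cc: "c \<in> carrier (deg0 R12)" unfolding c_def using s n by simp
  have fc: "fst f c = c1" unfolding c_def using s n cy
    by (simp del: F.h_diff add: F.h_diff[symmetric])
  have "nn c = n" by (rule nn_unique[OF cc n(1,2)]) (simp only: fc, simp add: c_def)
  then have "H0 c = ob" unfolding H0_def using fc n cy by simp
  moreover have "K0 ob = c" unfolding cy K0_gob c_def n_def ..
  ultimately show ?thesis using cc by simp
qed

definition H1 where "H1 u = (H0 (fst u), H0 (fst u \<oplus>\<^bsub>deg0 R12\<^esub> diff R12 (snd u)),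
   (fst f (fst u), snd f (snd u)), (fst g (fst u), snd g (snd u)))"

lemma zz_nn:
  assumes c: "c \<in> carrier (deg0 R12)" and x: "x \<in> carrier (deg1 R12)"
  shows "zz (fst f c) (snd f x) \<oplus>\<^bsub>deg1 R12\<^esub> nn (c \<oplus>\<^bsub>deg0 R12\<^esub> diff R12 x) = nn c \<oplus>\<^bsub>deg1 R12\<^esub> x"
proof -
  define c' where "c' = c \<oplus>\<^bsub>deg0 R12\<^esub> diff R12 x"
  have c': "c' \<in> carrier (deg0 R12)" unfolding c'_def using c x by simp
  note np = nn_prop[OF c] and np' = nn_prop[OF c']
  define S where "S = sec (fst f c)"
  define S' where "S' = sec (fst f c')"
  define N where "N = diff R12 (nn c)"
  define N' where "N' = diff R12 (nn c')"
  define X where "X = diff R12 x"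
  have cl: "S \<in> carrier (deg0 R12)" "S' \<in> carrier (deg0 R12)" "N \<in> carrier (deg0 R12)"
    "N' \<in> carrier (deg0 R12)" "X \<in> carrier (deg0 R12)"
    using sec_prop c c' np np' x unfolding S_def S'_def N_def N'_def X_def by auto
  have e1: "c = S \<oplus>\<^bsub>deg0 R12\<^esub> N" using np unfolding S_def N_def by metis
  have e2: "c' = S' \<oplus>\<^bsub>deg0 R12\<^esub> N'" using np' unfolding S'_def N'_def by metis
  have e3: "c' = c \<oplus>\<^bsub>deg0 R12\<^esub> X" unfolding c'_def X_def ..
  define z where "z = nn c \<oplus>\<^bsub>deg1 R12\<^esub> (x \<oplus>\<^bsub>deg1 R12\<^esub> \<ominus>\<^bsub>deg1 R12\<^esub> nn c')"
  have zc: "z \<in> carrier (deg1 R12)" unfolding z_def using np np' x by simp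
  have "S \<oplus>\<^bsub>deg0 R12\<^esub> diff R12 z = S \<oplus>\<^bsub>deg0 R12\<^esub> (N \<oplus>\<^bsub>deg0 R12\<^esub> (X \<oplus>\<^bsub>deg0 R12\<^esub> \<ominus>\<^bsub>deg0 R12\<^esub> N'))"
    unfolding z_def N_def X_def N'_def using np np' x by simp
  also have "\<dots> = ((S \<oplus>\<^bsub>deg0 R12\<^esub> N) \<oplus>\<^bsub>deg0 R12\<^esub> X) \<oplus>\<^bsub>deg0 R12\<^esub> \<ominus>\<^bsub>deg0 R12\<^esub> N'"
    using cl by (simp add: F.S.C.a_assoc)
  also have "\<dots> = (S' \<oplus>\<^bsub>deg0 R12\<^esub> N') \<oplus>\<^bsub>deg0 R12\<^esub> \<ominus>\<^bsub>deg0 R12\<^esub> N'"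
    using e1 e2 e3 by simp
  also have "\<dots> = S'" using cl by (simp add: F.S.C.a_assoc F.S.C.r_neg)
  finally have ez: "S \<oplus>\<^bsub>deg0 R12\<^esub> diff R12 z = S'" .
  have fc': "fst f c' = fst f c \<oplus>\<^bsub>deg0 R1\<^esub> diff R1 (snd f x)" unfolding c'_def using c x by simp
  have "zz (fst f c) (snd f x) = z"
  proof (rule zz_unique)
    show "snd f z = snd f x" unfolding z_def using np np' x by simp
    show "sec (fst f c \<oplus>\<^bsub>deg0 R1\<^esub> diff R1 (snd f x)) = sec (fst f c) \<oplus>\<^bsub>deg0 R12\<^esub> diff R12 z"
      using ez fc' unfolding S_def S'_def by simp
  qed (use c x zc in auto)
  then show ?thesis unfolding c'_def[symmetric] z_def using np np' x
    by (simp add: F.S.I.a_assoc F.S.I.l_neg)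
qed

lemma H1_form:
  assumes c: "c \<in> carrier (deg0 R12)" and x: "x \<in> carrier (deg1 R12)"
  shows "H1 (c, x) = (Gp.gob (fst f c) (snd g (nn c)),
     Gp.gob (fst f (c \<oplus>\<^bsub>deg0 R12\<^esub> diff R12 x)) (snd g (nn (c \<oplus>\<^bsub>deg0 R12\<^esub> diff R12 x))),
     (fst f c, snd f x), (fst Phi (fst f c) \<oplus>\<^bsub>deg0 R2\<^esub> diff R2 (snd g (nn c)), snd g x))"
  unfolding H1_def H0_def using g0_nn[OF c] by simp

lemma H1_in:
  assumes c: "c \<in> carrier (deg0 R12)" and x: "x \<in> carrier (deg1 R12)"
  shows "H1 (c, x) \<in> Ar Gp.Gr"
proof -
  have c': "c \<oplus>\<^bsub>deg0 R12\<^esub> diff R12 x \<in> carrier (deg0 R12)" using c x by simp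
  note np = nn_prop[OF c] and np' = nn_prop[OF c']
  have "snd g (zz (fst f c) (snd f x) \<oplus>\<^bsub>deg1 R12\<^esub> nn (c \<oplus>\<^bsub>deg0 R12\<^esub> diff R12 x)) =
        snd g (nn c \<oplus>\<^bsub>deg1 R12\<^esub> x)" using zz_nn[OF c x] by simp
  then have eq: "Gp.phi (fst f c) (snd f x) \<oplus>\<^bsub>deg1 R2\<^esub> snd g (nn (c \<oplus>\<^bsub>deg0 R12\<^esub> diff R12 x)) =
     snd g (nn c) \<oplus>\<^bsub>deg1 R2\<^esub> snd g x"
    using zz_prop[of "fst f c" "snd f x"] c x np np' by (simp add: phi_eq)
  show ?thesis unfolding H1_form[OF c x]
    by (rule Gp.ar_intro) (use c x np np' eq in simp_all)
qed

definition K1 where "K1 v = (K0 (fst v), P (snd (fst (snd (snd v)))) (snd (snd (snd (snd v)))))"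

lemma K1_prop:
  assumes v: "v \<in> Ar Gp.Gr"
  shows "K1 v \<in> carrier (deg0 R12) \<times> carrier (deg1 R12) \<and> H1 (K1 v) = v"
proof -
  obtain s t a1 a2 where vv: "v = (s, t, a1, a2)" by (cases v) auto
  have m: "s \<in> graph_ob (Cone R1) (Cone R2) Phi" "t \<in> graph_ob (Cone R1) (Cone R2) Phi"
    "a1 \<in> Ar (Cone R1)" "a2 \<in> Ar (Cone R2)" "Dom (Cone R1) a1 = fst s" "Dom (Cone R2) a2 = fst (snd s)"
    using v unfolding vv gr_Ar by auto
  obtain e1 x1 where a1: "a1 = (e1, x1)" "e1 = fst s" "x1 \<in> carrier (deg1 R1)" using m(3,5) by (cases a1) auto
  obtain e2 x2 where a2: "a2 = (e2, x2)" "e2 = fst (snd s)" "x2 \<in> carrier (deg1 R2)" using m(4,6) by (cases a2) auto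
  define c where "c = K0 s"
  define x where "x = P x1 x2"
  have cc: "c \<in> carrier (deg0 R12)" and Hc: "H0 c = s" using HK0[OF m(1)] unfolding c_def by auto
  have xp: "x \<in> carrier (deg1 R12)" "snd f x = x1" "snd g x = x2" using P_prop[OF a1(3) a2(3)] unfolding x_def by auto
  have K1v: "K1 v = (c, x)" unfolding K1_def vv a1 a2 c_def x_def by simp
  have "H1 (c, x) = (s, H0 (c \<oplus>\<^bsub>deg0 R12\<^esub> diff R12 x), a1, a2)"
    unfolding H1_def using Hc H0_simps[OF cc] xp a1 a2 by simp
  moreover have "H1 (c, x) \<in> Ar Gp.Gr" using H1_in[OF cc xp(1)] .
  ultimately have "H0 (c \<oplus>\<^bsub>deg0 R12\<^esub> diff R12 x) = t" using Gp.gr_tgt v unfolding vv by metis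
  then have "H1 (c, x) = v" unfolding H1_def vv using Hc H0_simps[OF cc] xp a1 a2 by simp
  then show ?thesis using K1v cc xp by simp
qed


lemma P_add:
  assumes "x1 \<in> carrier (deg1 R1)" "y1 \<in> carrier (deg1 R1)" "x2 \<in> carrier (deg1 R2)" "y2 \<in> carrier (deg1 R2)"
  shows "P (x1 \<oplus>\<^bsub>deg1 R1\<^esub> y1) (x2 \<oplus>\<^bsub>deg1 R2\<^esub> y2) = P x1 x2 \<oplus>\<^bsub>deg1 R12\<^esub> P y1 y2"
  using P_prop[of x1 x2] P_prop[of y1 y2] P_prop[of "x1 \<oplus>\<^bsub>deg1 R1\<^esub> y1" "x2 \<oplus>\<^bsub>deg1 R2\<^esub> y2"] assms
  by (intro pinj) auto

lemma H_functor: "is_functor (Cone R12) Gp.Gr (H0, H1)"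
  unfolding is_functor_def
proof (intro conjI ballI impI)
  fix a assume "a \<in> Ob (Cone R12)"
  then show "fst (H0, H1) a \<in> Ob Gp.Gr" using H0_in by simp
next
  fix u assume "u \<in> Ar (Cone R12)"
  then obtain c x where u: "u = (c, x)" "c \<in> carrier (deg0 R12)" "x \<in> carrier (deg1 R12)" by auto
  show "snd (H0, H1) u \<in> Ar Gp.Gr" using H1_in u by simp
  show "Dom Gp.Gr (snd (H0, H1) u) = fst (H0, H1) (Dom (Cone R12) u)" by (simp add: u H1_def)
  show "Cod Gp.Gr (snd (H0, H1) u) = fst (H0, H1) (Cod (Cone R12) u)" by (simp add: u H1_def)
next
  fix a assume a: "a \<in> Ob (Cone R12)"
  then show "snd (H0, H1) (Idn (Cone R12) a) = Idn Gp.Gr (fst (H0, H1) a)"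
    using H0_simps[of a] by (simp add: H1_def)
next
  fix u v assume "u \<in> Ar (Cone R12)" "v \<in> Ar (Cone R12)" and cd: "Cod (Cone R12) u = Dom (Cone R12) v"
  then obtain c x c' x' where u: "u = (c, x)" "c \<in> carrier (deg0 R12)" "x \<in> carrier (deg1 R12)"
    and v: "v = (c', x')" "c' \<in> carrier (deg0 R12)" "x' \<in> carrier (deg1 R12)" by auto
  have c': "c' = c \<oplus>\<^bsub>deg0 R12\<^esub> diff R12 x" using cd u v by simp
  show "snd (H0, H1) (Cmp (Cone R12) v u) = Cmp Gp.Gr (snd (H0, H1) v) (snd (H0, H1) u)"
    using u v by (simp add: H1_def c' F.S.C.a_assoc)
qed

lemma K_functor: "is_functor Gp.Gr (Cone R12) (K0, K1)"
  unfolding is_functor_def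
proof (intro conjI ballI impI)
  fix a assume "a \<in> Ob Gp.Gr"
  then show "fst (K0, K1) a \<in> Ob (Cone R12)" using HK0 by simp
next
  fix v assume v: "v \<in> Ar Gp.Gr"
  obtain c x where cx: "K1 v = (c, x)" by (cases "K1 v")
  note kp = K1_prop[OF v]
  have cc: "c \<in> carrier (deg0 R12)" "x \<in> carrier (deg1 R12)" using kp cx by auto
  have hv: "H1 (c, x) = v" using kp cx by simp
  show "snd (K0, K1) v \<in> Ar (Cone R12)" using kp by simp
  have "fst v = H0 c" using hv unfolding H1_def by auto
  then have "Dom Gp.Gr v = H0 c" by (cases v) auto
  then show "Dom (Cone R12) (snd (K0, K1) v) = fst (K0, K1) (Dom Gp.Gr v)"
    using cx KH0[OF cc(1)] unfolding K1_def by simp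
  have "fst (snd v) = H0 (c \<oplus>\<^bsub>deg0 R12\<^esub> diff R12 x)" using hv unfolding H1_def by auto
  then have "Cod Gp.Gr v = H0 (c \<oplus>\<^bsub>deg0 R12\<^esub> diff R12 x)" by (cases v) auto
  then show "Cod (Cone R12) (snd (K0, K1) v) = fst (K0, K1) (Cod Gp.Gr v)"
    using cx KH0[of "c \<oplus>\<^bsub>deg0 R12\<^esub> diff R12 x"] cc by simp
next
  fix a assume a: "a \<in> Ob Gp.Gr"
  have "P \<zero>\<^bsub>deg1 R1\<^esub> \<zero>\<^bsub>deg1 R2\<^esub> = \<zero>\<^bsub>deg1 R12\<^esub>" using P_eq[of "\<zero>\<^bsub>deg1 R12\<^esub>"] by simp
  then show "snd (K0, K1) (Idn Gp.Gr a) = Idn (Cone R12) (fst (K0, K1) a)"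
    by (simp add: K1_def)
next
  fix v w assume v: "v \<in> Ar Gp.Gr" and w: "w \<in> Ar Gp.Gr" and cd: "Cod Gp.Gr v = Dom Gp.Gr w"
  obtain s t a1 a2 where vv: "v = (s, t, a1, a2)" by (cases v) auto
  obtain s' t' b1 b2 where ww: "w = (s', t', b1, b2)" by (cases w) auto
  have "a1 \<in> Ar (Cone R1)" "a2 \<in> Ar (Cone R2)" "b1 \<in> Ar (Cone R1)" "b2 \<in> Ar (Cone R2)"
    using v w unfolding vv ww gr_Ar by auto
  then obtain e1 x1 e2 x2 d1 y1 d2 y2 where a1: "a1 = (e1, x1)" "x1 \<in> carrier (deg1 R1)"
    and a2: "a2 = (e2, x2)" "x2 \<in> carrier (deg1 R2)"
    and b1: "b1 = (d1, y1)" "y1 \<in> carrier (deg1 R1)"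
    and b2: "b2 = (d2, y2)" "y2 \<in> carrier (deg1 R2)" by auto
  show "snd (K0, K1) (Cmp Gp.Gr w v) = Cmp (Cone R12) (snd (K0, K1) w) (snd (K0, K1) v)"
    using a1 a2 b1 b2 by (simp add: vv ww K1_def P_add)
qed

lemma fwd_main: "cat_admissible (Cone R1) (Cone R12) (Cone R2) (Cone_map f) (Cone_map g)"
  unfolding cat_admissible_def
proof (intro exI conjI)
  show "is_functor (Cone R1) (Cone R2) Phi" by (rule Phi_functor)
  show "cat_iso (Cone R12) Gp.Gr (H0, H1)"
    unfolding cat_iso_def
  proof (intro conjI exI)
    show "is_functor (Cone R12) Gp.Gr (H0, H1)" by (rule H_functor)
    show "is_functor Gp.Gr (Cone R12) (K0, K1)" by (rule K_functor)
    show "feq (Cone R12) (fcomp (K0, K1) (H0, H1)) (id, id)"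
      unfolding feq_def fcomp_def
    proof (intro conjI ballI)
      fix a assume "a \<in> Ob (Cone R12)" then show "fst (fst (K0, K1) \<circ> fst (H0, H1), snd (K0, K1) \<circ> snd (H0, H1)) a = fst (id, id) a"
        using KH0 by simp
    next
      fix u assume "u \<in> Ar (Cone R12)"
      then obtain c x where u: "u = (c, x)" "c \<in> carrier (deg0 R12)" "x \<in> carrier (deg1 R12)" by auto
      show "snd (fst (K0, K1) \<circ> fst (H0, H1), snd (K0, K1) \<circ> snd (H0, H1)) u = snd (id, id) u"
        using u KH0 P_eq by (simp add: K1_def H1_def)
    qed
    show "feq Gp.Gr (fcomp (H0, H1) (K0, K1)) (id, id)"
      unfolding feq_def fcomp_def using HK0 K1_prop by simp
  qed
  show "feq (Cone R12) (fcomp graph_pr1 (H0, H1)) (Cone_map f)"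
    unfolding feq_def fcomp_def graph_pr1_def Cone_map_def
    using H0_simps by (auto simp: H1_def case_prod_beta)
  show "feq (Cone R12) (fcomp graph_pr2 (H0, H1)) (Cone_map g)"
    unfolding feq_def fcomp_def graph_pr2_def Cone_map_def
    using H0_simps by (auto simp: H1_def case_prod_beta)
qed

end

theorem lemma4p7p1:
  fixes R1 :: "('a, 'b) dgr" and R12 :: "('c, 'd) dgr" and R2 :: "('e, 'h) dgr"
    and f :: "('c \<Rightarrow> 'a) \<times> ('d \<Rightarrow> 'b)" and g :: "('c \<Rightarrow> 'e) \<times> ('d \<Rightarrow> 'h)"
  assumes "dg_ring R1" and "dg_ring R12" and "dg_ring R2"
    and "dg_hom R12 R1 f" and "dg_hom R12 R2 g"
  shows "dg_admissible R1 R12 R2 f g \<longleftrightarrow>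
         cat_admissible (Cone R1) (Cone R12) (Cone R2) (Cone_map f) (Cone_map g)"
proof -
  interpret corr R1 R12 R2 f g
    using assms by (simp add: corr_def dgH_def dgH_axioms_def dgA_def)
  show ?thesis
  proof
    assume a: "dg_admissible R1 R12 R2 f g"
    interpret fwd R1 R12 R2 f g by unfold_locales (rule a)
    show "cat_admissible (Cone R1) (Cone R12) (Cone R2) (Cone_map f) (Cone_map g)" by (rule fwd_main)
  next
    assume "cat_admissible (Cone R1) (Cone R12) (Cone R2) (Cone_map f) (Cone_map g)"
    then obtain \<Phi> H K where Phi: "is_functor (Cone R1) (Cone R2) \<Phi>"
      and H: "is_functor (Cone R12) (graph_cat (Cone R1) (Cone R2) \<Phi>) H"
      and K: "is_functor (graph_cat (Cone R1) (Cone R2) \<Phi>) (Cone R12) K"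
      and KH: "feq (Cone R12) (fcomp K H) (id, id)"
      and HK: "feq (graph_cat (Cone R1) (Cone R2) \<Phi>) (fcomp H K) (id, id)"
      and P1: "feq (Cone R12) (fcomp graph_pr1 H) (Cone_map f)"
      and P2: "feq (Cone R12) (fcomp graph_pr2 H) (Cone_map g)"
      unfolding cat_admissible_def cat_iso_def by blast
    interpret grph R1 R12 R2 f g \<Phi> by unfold_locales (rule Phi)
    interpret conv R1 R12 R2 f g \<Phi> H K by unfold_locales (rule H K KH HK P1 P2)+
    show "dg_admissible R1 R12 R2 f g" by (rule conv_main)
  qed
qed

end
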